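(* Assume in addition that $\mathbb{X}_f$ contains an open neighborhood of the origin and that $\mathbb{X}$ is compact. Suppose there is a class $\mathcal{K}_\infty$ function $\alpha$ such that, for every $N\in\{0,1,\ldots,M\}$, $V^0_N(x)\le\alpha(|x|)$ for all $x\in\mathbb{X}_f$. Then there is a class $\mathcal{K}_\infty$ function $\beta$ such that $V(x)\le\beta(|x|)$ for all $x\in\mathbb{X}$.
   Context: Consider the discrete-time controlled system $x^+=f(x,u)$ with state $x\in\mathbb{R}^{n}$ and control $u\in\mathbb{R}^{m}$, constraint sets $\mathbb{X}\subset\mathbb{R}^n$, $\mathbb{U}\subset\mathbb{R}^m$, $\mathbb{Y}\subset\mathbb{R}^p$, and a constraint function $h(x,u)\in\mathbb{R}^p$. A control $u$ is feasible at $x\in\mathbb{X}$ if $u\in\mathbb{U}$, $f(x,u)\in\mathbb{X}$ and $h(x,u)\in\mathbb{Y}$. A control sequence $(u(0),\ldots,u(N-1))$ is feasible from $x$ if, for the state sequence defined by $x(0)=x$ and $x(k+1)=f(x(k),u(k))$, each $u(k)$ is feasible at $x(k)$. We are given a stage cost $l(x,u)$, a terminal set $\mathbb{X}_f$ and a terminal cost $V_f$ defined on $\mathbb{X}_f$. Horizon-$N$ problem at $x$: minimize $\sum_{k=0}^{N-1}l(x(k),u(k))+V_f(x(N))$ over control sequences that are feasible from $x$ and satisfy $x(N)\in\mathbb{X}_f$. Let $V_N^0(x)$ be its minimum value, which is assumed to be attained whenever the feasible set is nonempty. For $N=0$, $V_0^0(x)=V_f(x)$ for $x\in\mathbb{X}_f$.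 Standing assumptions: (A1) $f,l,h,V_f$ are continuous on an open set containing $\mathbb{X}\times\mathbb{U}$ (for $V_f$, an open set containing $\mathbb{X}_f$). The stage cost $l$ is nonnegative definite in $(x,u)$ and positive definite in $u$. $V_f$ is positive definite on $\mathbb{X}_f$. Moreover $f(0,0)=0$, $l(0,0)=0$ and $V_f(0)=0$. (A2) $\mathbb{X}$ and $\mathbb{X}_f$ are closed, $\mathbb{X}_f\subset\mathbb{X}$, $\mathbb{U}$ is compact, and $\mathbb{X},\mathbb{X}_f,\mathbb{U}$ each contain a neighborhood of the origin. (A3) For every $x\in\mathbb{X}_f$ there is a control $u$ feasible at $x$ with $f(x,u)\in\mathbb{X}_f$ and $l(x,u)+V_f(f(x,u))\le V_f(x)$. (A4) For every $x\in\mathbb{X}$ there exist an integer $N\ge0$ and a feasible control sequence of length $N$ from $x$ whose state sequence satisfies $x(N)\in\mathbb{X}_f$. For $x\in\mathbb{X}$, $N(x)$ denotes the minimum such $N$. (A5) There is an integer $M\ge 0$ with $N(x)\le M$ for all $x\in\mathbb{X}$. (A6) There are class $\mathcal{K}_\infty$ functions $\alpha_1,\alpha_2$ with $l(x,u)\ge\alpha_1(|x|)$ for all $x\in\mathbb{X}$, $u\in\mathbb{U}$, and $V_f(x)\le\alpha_2(|x|)$ for all $x\in\mathbb{X}_f$. Define $V(x)=V^0_{N(x)}(x)$ for $x\in\mathbb{X}$. *)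

theory Defs
  imports "HOL-Analysis.Analysis"
begin

definition classKinf :: "(real \<Rightarrow> real) \<Rightarrow> bool" where
  "classKinf \<alpha> \<longleftrightarrow> continuous_on {0..} \<alpha> \<and> \<alpha> 0 = 0 \<and> strict_mono_on {0..} \<alpha>
     \<and> filterlim \<alpha> at_top at_top"

fun traj :: "('a \<Rightarrow> 'b \<Rightarrow> 'a) \<Rightarrow> 'a \<Rightarrow> (nat \<Rightarrow> 'b) \<Rightarrow> nat \<Rightarrow> 'a" where
  "traj f x us 0 = x"
| "traj f x us (Suc k) = f (traj f x us k) (us k)"

definition feasible_ctrl ::
  "('a \<Rightarrow> 'b \<Rightarrow> 'a) \<Rightarrow> ('a \<Rightarrow> 'b \<Rightarrow> 'c) \<Rightarrow> 'a set \<Rightarrow> 'b set \<Rightarrow> 'c set \<Rightarrow> 'a \<Rightarrow> 'b \<Rightarrow> bool" where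
  "feasible_ctrl f h X U Y x u \<longleftrightarrow> u \<in> U \<and> f x u \<in> X \<and> h x u \<in> Y"

text \<open>Control sequence of length N (only us 0, ..., us (N-1) matter) feasible from x.\<close>
definition feasible_seq ::
  "('a \<Rightarrow> 'b \<Rightarrow> 'a) \<Rightarrow> ('a \<Rightarrow> 'b \<Rightarrow> 'c) \<Rightarrow> 'a set \<Rightarrow> 'b set \<Rightarrow> 'c set \<Rightarrow> nat \<Rightarrow> 'a \<Rightarrow> (nat \<Rightarrow> 'b) \<Rightarrow> bool" where
  "feasible_seq f h X U Y N x us \<longleftrightarrow> (\<forall>k<N. feasible_ctrl f h X U Y (traj f x us k) (us k))"

definition admissible ::
  "('a \<Rightarrow> 'b \<Rightarrow> 'a) \<Rightarrow> ('a \<Rightarrow> 'b \<Rightarrow> 'c) \<Rightarrow> 'a set \<Rightarrow> 'b set \<Rightarrow> 'c set \<Rightarrow> 'a set \<Rightarrow> nat \<Rightarrow> 'a \<Rightarrow> (nat \<Rightarrow> 'b) \<Rightarrow> bool" where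
  "admissible f h X U Y Xf N x us \<longleftrightarrow> feasible_seq f h X U Y N x us \<and> traj f x us N \<in> Xf"

definition cost ::
  "('a \<Rightarrow> 'b \<Rightarrow> 'a) \<Rightarrow> ('a \<Rightarrow> 'b \<Rightarrow> real) \<Rightarrow> ('a \<Rightarrow> real) \<Rightarrow> nat \<Rightarrow> 'a \<Rightarrow> (nat \<Rightarrow> 'b) \<Rightarrow> real" where
  "cost f l Vf N x us = (\<Sum>k<N. l (traj f x us k) (us k)) + Vf (traj f x us N)"

text \<open>Optimal value V_N^0(x) (the minimum, assumed attained, is the infimum).\<close>
definition VN0 ::
  "('a \<Rightarrow> 'b \<Rightarrow> 'a) \<Rightarrow> ('a \<Rightarrow> 'b \<Rightarrow> 'c) \<Rightarrow> 'a set \<Rightarrow> 'b set \<Rightarrow> 'c set \<Rightarrow> 'a set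
     \<Rightarrow> ('a \<Rightarrow> 'b \<Rightarrow> real) \<Rightarrow> ('a \<Rightarrow> real) \<Rightarrow> nat \<Rightarrow> 'a \<Rightarrow> real" where
  "VN0 f h X U Y Xf l Vf N x = Inf {cost f l Vf N x us | us. admissible f h X U Y Xf N x us}"

definition Nmin ::
  "('a \<Rightarrow> 'b \<Rightarrow> 'a) \<Rightarrow> ('a \<Rightarrow> 'b \<Rightarrow> 'c) \<Rightarrow> 'a set \<Rightarrow> 'b set \<Rightarrow> 'c set \<Rightarrow> 'a set \<Rightarrow> 'a \<Rightarrow> nat" where
  "Nmin f h X U Y Xf x = (LEAST N. \<exists>us. admissible f h X U Y Xf N x us)"

definition Vfun ::
  "('a \<Rightarrow> 'b \<Rightarrow> 'a) \<Rightarrow> ('a \<Rightarrow> 'b \<Rightarrow> 'c) \<Rightarrow> 'a set \<Rightarrow> 'b set \<Rightarrow> 'c set \<Rightarrow> 'a set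
     \<Rightarrow> ('a \<Rightarrow> 'b \<Rightarrow> real) \<Rightarrow> ('a \<Rightarrow> real) \<Rightarrow> 'a \<Rightarrow> real" where
  "Vfun f h X U Y Xf l Vf x = VN0 f h X U Y Xf l Vf (Nmin f h X U Y Xf x) x"

end

theory Submission
  imports Defs
begin

theorem proposition3:
  fixes f :: "'a::euclidean_space \<Rightarrow> 'b::euclidean_space \<Rightarrow> 'a"
    and h :: "'a \<Rightarrow> 'b \<Rightarrow> 'c::euclidean_space"
    and l :: "'a \<Rightarrow> 'b \<Rightarrow> real"
    and Vf :: "'a \<Rightarrow> real"
    and X Xf :: "'a set" and U :: "'b set" and Y :: "'c set"
    and M :: nat and \<alpha> :: "real \<Rightarrow> real"
  assumes A1_f: "\<exists>W. open W \<and> X \<times> U \<subseteq> W \<and> continuous_on W (\<lambda>(x, u). f x u)"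
    and A1_l: "\<exists>W. open W \<and> X \<times> U \<subseteq> W \<and> continuous_on W (\<lambda>(x, u). l x u)"
    and A1_h: "\<exists>W. open W \<and> X \<times> U \<subseteq> W \<and> continuous_on W (\<lambda>(x, u). h x u)"
    and A1_Vf: "\<exists>W. open W \<and> Xf \<subseteq> W \<and> continuous_on W Vf"
    and A1_l_nonneg: "\<forall>x\<in>X. \<forall>u\<in>U. l x u \<ge> 0"
    and A1_l_posdef_u: "\<forall>x\<in>X. \<forall>u\<in>U. u \<noteq> 0 \<longrightarrow> l x u > 0"
    and A1_Vf_posdef: "\<forall>x\<in>Xf. x \<noteq> 0 \<longrightarrow> Vf x > 0"
    and A1_zero: "f 0 0 = 0" "l 0 0 = 0" "Vf 0 = 0"
    and A2: "closed X" "closed Xf" "Xf \<subseteq> X" "compact U"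
            "0 \<in> interior X" "0 \<in> interior Xf" "0 \<in> interior U"
    and A3: "\<forall>x\<in>Xf. \<exists>u. feasible_ctrl f h X U Y x u \<and> f x u \<in> Xf \<and> l x u + Vf (f x u) \<le> Vf x"
    and A4: "\<forall>x\<in>X. \<exists>N us. admissible f h X U Y Xf N x us"
    and A5: "\<forall>x\<in>X. Nmin f h X U Y Xf x \<le> M"
    and A6: "\<exists>\<alpha>1 \<alpha>2. classKinf \<alpha>1 \<and> classKinf \<alpha>2 \<and>
               (\<forall>x\<in>X. \<forall>u\<in>U. l x u \<ge> \<alpha>1 (norm x)) \<and> (\<forall>x\<in>Xf. Vf x \<le> \<alpha>2 (norm x))"
    and attained: "\<forall>N x. (\<exists>us. admissible f h X U Y Xf N x us) \<longrightarrow>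
               (\<exists>us. admissible f h X U Y Xf N x us \<and>
                  (\<forall>vs. admissible f h X U Y Xf N x vs \<longrightarrow> cost f l Vf N x us \<le> cost f l Vf N x vs))"
    and Xf_nbhd: "\<exists>S. open S \<and> 0 \<in> S \<and> S \<subseteq> Xf"
    and X_compact: "compact X"
    and alpha: "classKinf \<alpha>"
    and bound: "\<forall>N\<le>M. \<forall>x\<in>Xf. VN0 f h X U Y Xf l Vf N x \<le> \<alpha> (norm x)"
  shows "\<exists>\<beta>. classKinf \<beta> \<and> (\<forall>x\<in>X. Vfun f h X U Y Xf l Vf x \<le> \<beta> (norm x))"
proof -
  obtain Wl where Wl: "open Wl" "X \<times> U \<subseteq> Wl" "continuous_on Wl (\<lambda>(x, u). l x u)" using A1_l by blast
  have cpt: "compact ((\<lambda>(x, u). l x u) ` (X \<times> U))"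
    using compact_continuous_image[OF continuous_on_subset[OF Wl(3) Wl(2)]] compact_Times[OF X_compact A2(4)] by blast
  then obtain L0 where L0: "\<forall>y\<in>(\<lambda>(x, u). l x u) ` (X \<times> U). norm y \<le> L0"
    using compact_imp_bounded bounded_iff by metis
  define L where "L = max L0 0"
  have Lb: "\<And>x u. x \<in> X \<Longrightarrow> u \<in> U \<Longrightarrow> l x u \<le> L"
  proof -
    fix x u assume "x \<in> X" "u \<in> U"
    then have "norm (l x u) \<le> L0" using L0 by force
    then show "l x u \<le> L" unfolding L_def by auto
  qed
  have L0': "L \<ge> 0" unfolding L_def by auto
  obtain Wv where Wv: "open Wv" "Xf \<subseteq> Wv" "continuous_on Wv Vf" using A1_Vf by blast
  have cXf: "compact Xf" using X_compact A2(2) A2(3) compact_Int_closed[of X Xf] by (simp add: Int_absorb1)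
  have "compact (Vf ` Xf)"
    using compact_continuous_image[OF continuous_on_subset[OF Wv(3) Wv(2)] cXf] .
  then obtain B where B: "\<forall>y\<in>Vf ` Xf. norm y \<le> B"
    using compact_imp_bounded bounded_iff by metis
  have Bb: "\<And>x. x \<in> Xf \<Longrightarrow> Vf x \<le> B"
  proof -
    fix x assume "x \<in> Xf"
    then have "norm (Vf x) \<le> B" using B by force
    then show "Vf x \<le> B" by auto
  qed
  define C where "C = real M * L + B"
  have trajX: "\<And>x N us k. x \<in> X \<Longrightarrow> admissible f h X U Y Xf N x us \<Longrightarrow> k \<le> N \<Longrightarrow> traj f x us k \<in> X"
  proof -
    fix x N us k assume x: "x \<in> X" and ad: "admissible f h X U Y Xf N x us"
    show "k \<le> N \<Longrightarrow> traj f x us k \<in> X"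
    proof (induction k)
      case 0 then show ?case using x by simp
    next
      case (Suc k)
      then have "k < N" by simp
      then have "feasible_ctrl f h X U Y (traj f x us k) (us k)"
        using ad unfolding admissible_def feasible_seq_def by blast
      then show ?case unfolding feasible_ctrl_def by simp
    qed
  qed
  have costb: "\<And>x N us. x \<in> X \<Longrightarrow> admissible f h X U Y Xf N x us \<Longrightarrow> N \<le> M \<Longrightarrow> cost f l Vf N x us \<le> C"
  proof -
    fix x N us assume x: "x \<in> X" and ad: "admissible f h X U Y Xf N x us" and NM: "N \<le> M"
    have "(\<Sum>k<N. l (traj f x us k) (us k)) \<le> (\<Sum>k<N. L)"
    proof (rule sum_mono)
      fix k assume "k \<in> {..<N}"
      then have kN: "k < N" by simp
      then have "feasible_ctrl f h X U Y (traj f x us k) (us k)"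
        using ad unfolding admissible_def feasible_seq_def by blast
      then have "us k \<in> U" unfolding feasible_ctrl_def by simp
      moreover have "traj f x us k \<in> X" using trajX[OF x ad] kN by simp
      ultimately show "l (traj f x us k) (us k) \<le> L" using Lb by blast
    qed
    also have "\<dots> = real N * L" by simp
    also have "\<dots> \<le> real M * L" using NM L0' by (simp add: mult_right_mono)
    finally have s: "(\<Sum>k<N. l (traj f x us k) (us k)) \<le> real M * L" .
    have "Vf (traj f x us N) \<le> B" using ad Bb unfolding admissible_def by blast
    then show "cost f l Vf N x us \<le> C" using s unfolding cost_def C_def by linarith
  qed
  have Vval: "\<And>x. x \<in> X \<Longrightarrow> \<exists>us. admissible f h X U Y Xf (Nmin f h X U Y Xf x) x us \<and>
      Vfun f h X U Y Xf l Vf x = cost f l Vf (Nmin f h X U Y Xf x) x us"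
  proof -
    fix x assume x: "x \<in> X"
    define N where "N = Nmin f h X U Y Xf x"
    have "\<exists>us. admissible f h X U Y Xf N x us"
      unfolding N_def Nmin_def
    proof (rule LeastI_ex)
      show "\<exists>N us. admissible f h X U Y Xf N x us" using A4 x by blast
    qed
    then obtain us where us: "admissible f h X U Y Xf N x us"
      "\<forall>vs. admissible f h X U Y Xf N x vs \<longrightarrow> cost f l Vf N x us \<le> cost f l Vf N x vs"
      using attained by blast
    have "Inf {cost f l Vf N x us | us. admissible f h X U Y Xf N x us} = cost f l Vf N x us"
      by (rule cInf_eq_minimum) (use us in auto)
    then show "?thesis x" using us(1) unfolding Vfun_def VN0_def N_def by auto
  qed
  have VC: "\<And>x. x \<in> X \<Longrightarrow> Vfun f h X U Y Xf l Vf x \<le> C"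
    using Vval costb A5 by metis
  have VXf: "\<And>x. x \<in> Xf \<Longrightarrow> Vfun f h X U Y Xf l Vf x \<le> \<alpha> (norm x)"
  proof -
    fix x assume x: "x \<in> Xf"
    have "admissible f h X U Y Xf 0 x (\<lambda>_. 0)"
      using x unfolding admissible_def feasible_seq_def by simp
    then have "Nmin f h X U Y Xf x = 0" unfolding Nmin_def by (metis (mono_tags, lifting) Least_eq_0)
    then show "Vfun f h X U Y Xf l Vf x \<le> \<alpha> (norm x)" using bound x unfolding Vfun_def by simp
  qed
  obtain S where S: "open S" "0 \<in> S" "S \<subseteq> Xf" using Xf_nbhd by blast
  obtain r where r: "r > 0" "ball 0 r \<subseteq> S" using S openE by blast
  have a: "continuous_on {0..} \<alpha>" "\<alpha> 0 = 0" "strict_mono_on {0..} \<alpha>" "filterlim \<alpha> at_top at_top"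
    using alpha unfolding classKinf_def by auto
  have ar: "\<alpha> r > 0" using a(2,3) r(1) by (metis atLeast_iff less_eq_real_def order_refl strict_mono_onD)
  have anonneg: "\<And>s. s \<ge> 0 \<Longrightarrow> \<alpha> s \<ge> 0" using a(2,3) by (metis atLeast_iff order_refl less_eq_real_def strict_mono_onD)
  define k where "k = max 1 (C / \<alpha> r)"
  have k1: "k \<ge> 1" unfolding k_def by simp
  define \<beta> where "\<beta> = (\<lambda>s. k * \<alpha> s)"
  have "classKinf \<beta>"
    unfolding classKinf_def \<beta>_def
  proof (intro conjI)
    show "continuous_on {0..} (\<lambda>s. k * \<alpha> s)" using a(1) by (intro continuous_intros)
    show "k * \<alpha> 0 = 0" using a(2) by simp
    show "strict_mono_on {0..} (\<lambda>s. k * \<alpha> s)"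
      using a(3) k1 unfolding strict_mono_on_def by auto
    show "filterlim (\<lambda>s. k * \<alpha> s) at_top at_top"
      using filterlim_tendsto_pos_mult_at_top[OF tendsto_const _ a(4), of k] k1 by simp
  qed
  moreover have "\<forall>x\<in>X. Vfun f h X U Y Xf l Vf x \<le> \<beta> (norm x)"
  proof
    fix x assume x: "x \<in> X"
    show "Vfun f h X U Y Xf l Vf x \<le> \<beta> (norm x)"
    proof (cases "x \<in> Xf")
      case True
      have "\<alpha> (norm x) \<le> k * \<alpha> (norm x)" using k1 anonneg[of "norm x"]
        by (simp add: mult_le_cancel_right1)
      then show ?thesis using VXf[OF True] unfolding \<beta>_def by linarith
    next
      case False
      then have "x \<notin> ball 0 r" using r S by blast
      then have nr: "norm x \<ge> r" by (simp add: dist_norm)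
      then have "\<alpha> r \<le> \<alpha> (norm x)" using a(3) r(1)
        by (metis atLeast_iff less_eq_real_def strict_mono_onD norm_ge_zero)
      then have "k * \<alpha> r \<le> k * \<alpha> (norm x)" using k1 by simp
      moreover have "C \<le> k * \<alpha> r" using ar unfolding k_def
        by (smt (verit, best) divide_le_eq max.cobounded2 mult_right_mono)
      ultimately show ?thesis using VC[OF x] unfolding \<beta>_def by linarith
    qed
  qed
  ultimately show ?thesis by blast
qed

end
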